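(* For the two-pathogen model described in the context with positive parameters: (1) If $s=0$, $\mathcal{R}_{0,A}>1$ and $\mathcal{R}_{0,B}<1$, the disease-$B$-free equilibrium $(S_A,I_A,\widetilde I_A,S_B,I_B,\widetilde I_B)=(1-\bar I_A-\tfrac{\tau_R}{\tau_I}\bar I_A,\bar I_A,\bar I_A,1,0,0)$ is locally asymptotically stable; symmetrically, if $s=0$, $\mathcal{R}_{0,B}>1$ and $\mathcal{R}_{0,A}<1$, the disease-$A$-free equilibrium $(1,0,0,1-\bar I_B-\tfrac{\tau_R}{\tau_I}\bar I_B,\bar I_B,\bar I_B)$ is locally asymptotically stable. (2) If $s=1$, $\mathcal{R}_{0,A}>1$ and $\mathcal{R}_{0,B}<e^{k\bar I_A}$, the disease-$B$-free equilibrium is locally asymptotically stable, and in this case $\mathcal{R}_{0,A}>\mathcal{R}_{0,B}$; symmetrically, if $s=1$, $\mathcal{R}_{0,B}>1$ and $\mathcal{R}_{0,A}<e^{k\bar I_B}$, the disease-$A$-free equilibrium is locally asymptotically stable and $\mathcal{R}_{0,B}>\mathcal{R}_{0,A}$. (3) If $s\in(0,1)$, $\mathcal{R}_{0,A}>1$ and $\mathcal{R}_{0,B}<\dfrac{e^{k\bar I_A}}{e^{k\bar I_A}-s(e^{k\bar I_A}-1)}$, the disease-$B$-free equilibrium is locally asymptotically stable, and $\mathcal{R}_{0,A}>\mathcal{R}_{0,B}$; symmetrically, if $s\in(0,1)$, $\mathcal{R}_{0,B}>1$ and $\mathcal{R}_{0,A}<\dfrac{e^{k\bar I_B}}{e^{k\bar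 I_B}-s(e^{k\bar I_B}-1)}$, the disease-$A$-free equilibrium is locally asymptotically stable and $\mathcal{R}_{0,B}>\mathcal{R}_{0,A}$.
   Context: Model: for $i\in\{A,B\}$ with $j$ denoting the other disease, state variables $S_i,I_i,R_i,\widetilde I_i$ satisfy $\dot S_i=-\beta_i S_iI_i+R_i/\tau_R$, $\dot I_i=\beta_iS_iI_i-I_i/\tau_I$, $\dot R_i=I_i/\tau_I-R_i/\tau_R$, $\dot{\widetilde I}_i=(I_i-\widetilde I_i)/\tau_P$, with $S_i+I_i+R_i=1$, where $\beta_i=\beta_{0,i}\,e^{-k\widetilde I_i}\bigl(1-s(1-e^{-k\widetilde I_j})\bigr)$. All parameters $\beta_{0,A},\beta_{0,B},\tau_I,\tau_R,\tau_P,k$ are positive and $s\in[0,1]$ is the spillover constant. $\mathcal{R}_{0,i}=\beta_{0,i}\tau_I$. When $\mathcal{R}_{0,i}>1$, $\bar I_i$ denotes the unique positive solution of $e^{kI}=\beta_{0,i}\tau_I-\beta_{0,i}(\tau_I+\tau_R)I$. The reduced system is obtained by substituting $R_i=1-S_i-I_i$ and keeping only the equations for $S_i,I_i,\widetilde I_i$; equilibria are written in the order $(S_A,I_A,\widetilde I_A,S_B,I_B,\widetilde I_B)$. Locally asymptotically stable means all eigenvalues of the Jacobian of the reduced system at the equilibrium have negative real part. *)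

theory Defs
  imports "HOL-Analysis.Analysis"
begin

definition beta_eff :: "real \<Rightarrow> real \<Rightarrow> real \<Rightarrow> real \<Rightarrow> real \<Rightarrow> real" where
  "beta_eff b0 k s Ti Tj = b0 * exp (- k * Ti) * (1 - s * (1 - exp (- k * Tj)))"

text \<open>Vector field of the reduced system (R_i = 1 - S_i - I_i substituted).\<close>
definition reduced_field ::
  "real \<Rightarrow> real \<Rightarrow> real \<Rightarrow> real \<Rightarrow> real \<Rightarrow> real \<Rightarrow> real \<Rightarrow> real^6 \<Rightarrow> real^6" where
  "reduced_field b0A b0B tauI tauR tauP k s x =
     (let SA = x$1; IA = x$2; TA = x$3; SB = x$4; IB = x$5; TB = x$6;
          bA = beta_eff b0A k s TA TB; bB = beta_eff b0B k s TB TA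
      in vector [
           - bA * SA * IA + (1 - SA - IA) / tauR,
           bA * SA * IA - IA / tauI,
           (IA - TA) / tauP,
           - bB * SB * IB + (1 - SB - IB) / tauR,
           bB * SB * IB - IB / tauI,
           (IB - TB) / tauP])"

definition cplx_eigenvalue :: "real^'n^'n \<Rightarrow> complex \<Rightarrow> bool" where
  "cplx_eigenvalue J mu \<longleftrightarrow>
     (\<exists>v::complex^'n. v \<noteq> 0 \<and> (map_matrix complex_of_real J) *v v = mu *s v)"

definition loc_asym_stable :: "(real^'n \<Rightarrow> real^'n) \<Rightarrow> real^'n \<Rightarrow> bool" where
  "loc_asym_stable F x \<longleftrightarrow>
     (\<forall>mu. cplx_eigenvalue (jacobian F (at x)) mu \<longrightarrow> Re mu < 0)"

definition Ibar :: "real \<Rightarrow> real \<Rightarrow> real \<Rightarrow> real \<Rightarrow> real" where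
  "Ibar b0 tauI tauR k = (THE I. I > 0 \<and> exp (k * I) = b0 * tauI - b0 * (tauI + tauR) * I)"

definition B_free_eq :: "real \<Rightarrow> real \<Rightarrow> real \<Rightarrow> real \<Rightarrow> real^6" where
  "B_free_eq b0A tauI tauR k =
     (let I = Ibar b0A tauI tauR k in vector [1 - I - tauR / tauI * I, I, I, 1, 0, 0])"

definition A_free_eq :: "real \<Rightarrow> real \<Rightarrow> real \<Rightarrow> real \<Rightarrow> real^6" where
  "A_free_eq b0B tauI tauR k =
     (let I = Ibar b0B tauI tauR k in vector [1, 0, 0, 1 - I - tauR / tauI * I, I, I])"

end

theory Submission imports Defs begin


lemma exhaust_6:
  fixes x :: 6
  shows "x = 1 \<or> x = 2 \<or> x = 3 \<or> x = 4 \<or> x = 5 \<or> x = 6"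
proof (induct x)
  case (of_int z)
  then have "z = 0 \<or> z = 1 \<or> z = 2 \<or> z = 3 \<or> z = 4 \<or> z = 5" by fastforce
  then show ?case by auto
qed

lemma UNIV_6: "UNIV = {1, 2, 3, 4, 5, 6::6}"
  using exhaust_6 by auto

lemma sum_6: "sum f (UNIV::6 set) = f 1 + f 2 + f 3 + f 4 + f 5 + f 6"
  unfolding UNIV_6 by (simp add: ac_simps)

lemma vector_6 [simp]:
 "(vector [x1,x2,x3,x4,x5,x6] ::('a::zero)^6)$1 = x1"
 "(vector [x1,x2,x3,x4,x5,x6] ::('a::zero)^6)$2 = x2"
 "(vector [x1,x2,x3,x4,x5,x6] ::('a::zero)^6)$3 = x3"
 "(vector [x1,x2,x3,x4,x5,x6] ::('a::zero)^6)$4 = x4"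
 "(vector [x1,x2,x3,x4,x5,x6] ::('a::zero)^6)$5 = x5"
 "(vector [x1,x2,x3,x4,x5,x6] ::('a::zero)^6)$6 = x6"
  unfolding vector_def by simp_all

lemma vec_has_derivative:
  fixes f :: "real^'n \<Rightarrow> real^'m"
  assumes "\<And>i. ((\<lambda>x. f x $ i) has_derivative (\<lambda>h. f' h $ i)) (at a)"
  shows "(f has_derivative f') (at a)"
  using assms by (auto simp: has_derivative_componentwise_within[of f f' a UNIV] Basis_vec_def inner_axis)

lemma nth_has_derivative [derivative_intros]:
  "((\<lambda>x::real^'n. x $ i) has_derivative (\<lambda>h. h $ i)) F"
  by (rule bounded_linear_imp_has_derivative) (rule bounded_linear_vec_nth)


definition Jm :: "real \<Rightarrow> real \<Rightarrow> real \<Rightarrow> real \<Rightarrow> real \<Rightarrow> real \<Rightarrow> real \<Rightarrow> real^6 \<Rightarrow> real^6^6" where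
  "Jm b0A b0B tauI tauR tauP k s x =
    (let x1 = x$1; x2 = x$2; x3 = x$3; x4 = x$4; x5 = x$5; x6 = x$6;
         bA = beta_eff b0A k s x3 x6; bB = beta_eff b0B k s x6 x3;
         dA6 = - b0A * exp (- k * x3) * s * k * exp (- k * x6);
         dB3 = - b0B * exp (- k * x6) * s * k * exp (- k * x3)
     in vector [
       vector [-bA * x2 - 1/tauR, -bA * x1 - 1/tauR, k * bA * x1 * x2, 0, 0, -dA6 * x1 * x2],
       vector [bA * x2, bA * x1 - 1/tauI, -k * bA * x1 * x2, 0, 0, dA6 * x1 * x2],
       vector [0, 1/tauP, -1/tauP, 0, 0, 0],
       vector [0, 0, -dB3 * x4 * x5, -bB * x5 - 1/tauR, -bB * x4 - 1/tauR, k * bB * x4 * x5],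
       vector [0, 0, dB3 * x4 * x5, bB * x5, bB * x4 - 1/tauI, -k * bB * x4 * x5],
       vector [0, 0, 0, 0, 1/tauP, -1/tauP]])"

lemma F_deriv:
  assumes "tauI \<noteq> 0" "tauR \<noteq> 0" "tauP \<noteq> 0"
  shows "(reduced_field b0A b0B tauI tauR tauP k s has_derivative (\<lambda>h. Jm b0A b0B tauI tauR tauP k s x *v h)) (at x)"
proof (rule vec_has_derivative)
  fix i :: 6
  show "((\<lambda>y. reduced_field b0A b0B tauI tauR tauP k s y $ i) has_derivative
        (\<lambda>h. (Jm b0A b0B tauI tauR tauP k s x *v h) $ i)) (at x)"
    using exhaust_6[of i]
    apply (elim disjE)
    apply (simp_all add: reduced_field_def Jm_def Let_def beta_eff_def matrix_vector_mult_def sum_6)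
    apply (auto intro!: derivative_eq_intros ext simp: algebra_simps assms)
    apply (auto simp: field_simps assms)
    done
qed



lemma cubic_stable:
  fixes mu :: complex and a2 a1 a0 :: real
  assumes "a2 > 0" "a1 > 0" "a0 > 0" "a2 * a1 > a0"
    and eq: "mu^3 + of_real a2 * mu^2 + of_real a1 * mu + of_real a0 = 0"
  shows "Re mu < 0"
proof (rule ccontr)
  assume "\<not> Re mu < 0"
  hence x0: "Re mu \<ge> 0" by simp
  obtain x y where mu: "mu = Complex x y" by (cases mu)
  have "Re (mu^3 + of_real a2 * mu^2 + of_real a1 * mu + of_real a0) = 0"
       "Im (mu^3 + of_real a2 * mu^2 + of_real a1 * mu + of_real a0) = 0"
    using eq by simp_all
  hence re: "x^3 - 3*x*y^2 + a2*(x^2 - y^2) + a1*x + a0 = 0"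
     and im: "y * (3*x^2 - y^2 + 2*a2*x + a1) = 0"
    by (simp_all add: mu power3_eq_cube power2_eq_square algebra_simps)
  have x: "x \<ge> 0" using x0 mu by simp
  show False
  proof (cases "y = 0")
    case True
    with re have "x^3 + a2*x^2 + a1*x + a0 = 0" by simp
    moreover have "x^3 + a2*x^2 + a1*x \<ge> 0" using x assms by (simp add: add_nonneg_nonneg)
    ultimately show False using assms by linarith
  next
    case False
    with im have y2: "y^2 = 3*x^2 + 2*a2*x + a1" by simp
    have "x^3 - 3*x*y^2 + a2*(x^2 - y^2) + a1*x + a0
       = -8*x^3 - 8*a2*x^2 - (2*a1 + 2*a2^2)*x - (a2*a1 - a0)"
      unfolding y2 by (simp add: algebra_simps power2_eq_square power3_eq_cube)
    moreover have "8*x^3 + 8*a2*x^2 + (2*a1 + 2*a2^2)*x \<ge> 0"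
      using x assms by (intro add_nonneg_nonneg mult_nonneg_nonneg) auto
    ultimately show False using re assms by linarith
  qed
qed

lemma cub3:
  fixes mu v1 v2 v3 :: complex and a r i p c m11 m12 m13 m21 m22 m23 m31 m32 m33 :: real
  assumes pos: "a > 0" "r > 0" "i > 0" "p > 0" "c > 0"
    and m: "m11 = -a-r" "m12 = -(i+r)" "m13 = c" "m21 = a" "m22 = 0" "m23 = -c"
           "m31 = 0" "m32 = p" "m33 = -p"
    and e1: "of_real m11 * v1 + of_real m12 * v2 + of_real m13 * v3 = mu * v1"
    and e2: "of_real m21 * v1 + of_real m22 * v2 + of_real m23 * v3 = mu * v2"
    and e3: "of_real m31 * v1 + of_real m32 * v2 + of_real m33 * v3 = mu * v3"
    and nz: "v1 \<noteq> 0 \<or> v2 \<noteq> 0 \<or> v3 \<noteq> 0"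
  shows "Re mu < 0"
proof -
  define A R I P C where "A = complex_of_real a" "R = complex_of_real r" "I = complex_of_real i"
    "P = complex_of_real p" "C = complex_of_real c"
  have f1: "(-A-R) * v1 - (I+R) * v2 + C * v3 = mu * v1"
    using e1 unfolding m A_R_I_P_C_def by (simp add: algebra_simps)
  have f2: "A * v1 - C * v3 = mu * v2"
    using e2 unfolding m A_R_I_P_C_def by simp
  have f3: "P * v2 - P * v3 = mu * v3"
    using e3 unfolding m A_R_I_P_C_def by (simp add: algebra_simps)
  define Q where "Q = mu^3 + (A+R+P) * mu^2 + (A*(I+R) + P*(A+R) + C*P) * mu + P*(R*C + A*I + A*R)"
  have q1: "Q * v1 = 0" unfolding Q_def using f1 f2 f3 by algebra
  have q2: "Q * v2 = 0" unfolding Q_def using f1 f2 f3 by algebra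
  have q3: "Q * v3 = 0" unfolding Q_def using f1 f2 f3 by algebra
  have "Q = 0" using q1 q2 q3 nz by auto
  hence ceq: "mu^3 + of_real (a+r+p) * mu^2 + of_real (a*(i+r) + p*(a+r) + c*p) * mu
          + of_real (p*(r*c + a*i + a*r)) = 0"
    unfolding Q_def A_R_I_P_C_def by simp
  have hw: "(a+r+p) * (a*(i+r) + p*(a+r) + c*p) > p*(r*c + a*i + a*r)"
  proof -
    have "(a+r+p) * (a*(i+r) + p*(a+r) + c*p) = p*(r*c + a*i + a*r) +
         ((a+r) * (a*(i+r) + p*(a+r)) + a*c*p + p*p*(a+r) + c*p*p)"
      by (simp add: algebra_simps)
    moreover have "(a+r) * (a*(i+r) + p*(a+r)) + a*c*p + p*p*(a+r) + c*p*p > 0"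
      using pos by (intro add_pos_pos mult_pos_pos) auto
    ultimately show ?thesis by linarith
  qed
  show ?thesis
    by (rule cubic_stable[OF _ _ _ hw ceq]) (use pos in \<open>auto intro!: add_pos_pos mult_pos_pos\<close>)
qed

lemma tri3:
  fixes mu v1 v2 v3 :: complex and r d p m11 m12 m13 m21 m22 m23 m31 m32 m33 :: real
  assumes pos: "r > 0" "d < 0" "p > 0"
    and m: "m11 = -r" "m13 = 0" "m21 = 0" "m22 = d" "m23 = 0" "m31 = 0" "m33 = -p"
    and e1: "of_real m11 * v1 + of_real m12 * v2 + of_real m13 * v3 = mu * v1"
    and e2: "of_real m21 * v1 + of_real m22 * v2 + of_real m23 * v3 = mu * v2"
    and e3: "of_real m31 * v1 + of_real m32 * v2 + of_real m33 * v3 = mu * v3"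
    and nz: "v1 \<noteq> 0 \<or> v2 \<noteq> 0 \<or> v3 \<noteq> 0"
  shows "Re mu < 0"
proof (cases "v2 = 0")
  case False
  from e2 have "(of_real d - mu) * v2 = 0" unfolding m by (simp add: algebra_simps)
  with False have "mu = of_real d" by simp
  thus ?thesis using pos by simp
next
  case v2: True
  show ?thesis
  proof (cases "v1 = 0")
    case False
    from e1 v2 have "(of_real (-r) - mu) * v1 = 0" unfolding m by (simp add: algebra_simps)
    with False have "mu = of_real (-r)" by simp
    thus ?thesis using pos by simp
  next
    case True
    with nz v2 have "v3 \<noteq> 0" by simp
    from e3 v2 have "(of_real (-p) - mu) * v3 = 0" unfolding m by (simp add: algebra_simps)
    with \<open>v3 \<noteq> 0\<close> have "mu = of_real (-p)" by simp
    thus ?thesis using pos by simp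
  qed
qed

lemma block_upper:
  fixes J :: "real^6^6"
  assumes z: "J$4$1=0" "J$4$2=0" "J$4$3=0" "J$5$1=0" "J$5$2=0" "J$5$3=0" "J$6$1=0" "J$6$2=0" "J$6$3=0"
  and PB: "\<And>(mu::complex) (v4::complex) (v5::complex) (v6::complex).
     of_real (J$4$4) * v4 + of_real (J$4$5) * v5 + of_real (J$4$6) * v6 = mu * v4 \<Longrightarrow>
     of_real (J$5$4) * v4 + of_real (J$5$5) * v5 + of_real (J$5$6) * v6 = mu * v5 \<Longrightarrow>
     of_real (J$6$4) * v4 + of_real (J$6$5) * v5 + of_real (J$6$6) * v6 = mu * v6 \<Longrightarrow>
     v4 \<noteq> 0 \<or> v5 \<noteq> 0 \<or> v6 \<noteq> 0 \<Longrightarrow> Re mu < 0"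
  and PA: "\<And>(mu::complex) (v1::complex) (v2::complex) (v3::complex).
     of_real (J$1$1) * v1 + of_real (J$1$2) * v2 + of_real (J$1$3) * v3 = mu * v1 \<Longrightarrow>
     of_real (J$2$1) * v1 + of_real (J$2$2) * v2 + of_real (J$2$3) * v3 = mu * v2 \<Longrightarrow>
     of_real (J$3$1) * v1 + of_real (J$3$2) * v2 + of_real (J$3$3) * v3 = mu * v3 \<Longrightarrow>
     v1 \<noteq> 0 \<or> v2 \<noteq> 0 \<or> v3 \<noteq> 0 \<Longrightarrow> Re mu < 0"
  shows "\<forall>mu. cplx_eigenvalue J mu \<longrightarrow> Re mu < 0"
proof (intro allI impI)
  fix mu assume "cplx_eigenvalue J mu"
  then obtain v :: "complex^6" where nz: "v \<noteq> 0" and ev: "map_matrix complex_of_real J *v v = mu *s v"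
    unfolding cplx_eigenvalue_def by blast
  have c: "(\<Sum>j\<in>UNIV. of_real (J$i$j) * v$j) = mu * v$i" for i
    using ev unfolding vec_eq_iff matrix_vector_mult_def by auto
  note c6 = c[unfolded sum_6, of 1] c[unfolded sum_6, of 2] c[unfolded sum_6, of 3]
            c[unfolded sum_6, of 4] c[unfolded sum_6, of 5] c[unfolded sum_6, of 6]
  show "Re mu < 0"
  proof (cases "v$4 \<noteq> 0 \<or> v$5 \<noteq> 0 \<or> v$6 \<noteq> 0")
    case True
    show ?thesis by (rule PB[OF _ _ _ True]) (use c6(4,5,6) z in \<open>simp_all add: algebra_simps\<close>)
  next
    case False
    have "v$1 \<noteq> 0 \<or> v$2 \<noteq> 0 \<or> v$3 \<noteq> 0"
    proof (rule ccontr)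
      assume "\<not> ?thesis"
      with False have "v$i = 0" for i using exhaust_6[of i] by auto
      hence "v = 0" unfolding vec_eq_iff by simp
      with nz show False by simp
    qed
    then show ?thesis by (rule PA[rotated 3]) (use c6(1,2,3) False in \<open>simp_all add: algebra_simps\<close>)
  qed
qed

lemma block_lower:
  fixes J :: "real^6^6"
  assumes z: "J$1$4=0" "J$1$5=0" "J$1$6=0" "J$2$4=0" "J$2$5=0" "J$2$6=0" "J$3$4=0" "J$3$5=0" "J$3$6=0"
  and PB: "\<And>(mu::complex) (v4::complex) (v5::complex) (v6::complex).
     of_real (J$4$4) * v4 + of_real (J$4$5) * v5 + of_real (J$4$6) * v6 = mu * v4 \<Longrightarrow>
     of_real (J$5$4) * v4 + of_real (J$5$5) * v5 + of_real (J$5$6) * v6 = mu * v5 \<Longrightarrow>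
     of_real (J$6$4) * v4 + of_real (J$6$5) * v5 + of_real (J$6$6) * v6 = mu * v6 \<Longrightarrow>
     v4 \<noteq> 0 \<or> v5 \<noteq> 0 \<or> v6 \<noteq> 0 \<Longrightarrow> Re mu < 0"
  and PA: "\<And>(mu::complex) (v1::complex) (v2::complex) (v3::complex).
     of_real (J$1$1) * v1 + of_real (J$1$2) * v2 + of_real (J$1$3) * v3 = mu * v1 \<Longrightarrow>
     of_real (J$2$1) * v1 + of_real (J$2$2) * v2 + of_real (J$2$3) * v3 = mu * v2 \<Longrightarrow>
     of_real (J$3$1) * v1 + of_real (J$3$2) * v2 + of_real (J$3$3) * v3 = mu * v3 \<Longrightarrow>
     v1 \<noteq> 0 \<or> v2 \<noteq> 0 \<or> v3 \<noteq> 0 \<Longrightarrow> Re mu < 0"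
  shows "\<forall>mu. cplx_eigenvalue J mu \<longrightarrow> Re mu < 0"
proof (intro allI impI)
  fix mu assume "cplx_eigenvalue J mu"
  then obtain v :: "complex^6" where nz: "v \<noteq> 0" and ev: "map_matrix complex_of_real J *v v = mu *s v"
    unfolding cplx_eigenvalue_def by blast
  have c: "(\<Sum>j\<in>UNIV. of_real (J$i$j) * v$j) = mu * v$i" for i
    using ev unfolding vec_eq_iff matrix_vector_mult_def by auto
  note c6 = c[unfolded sum_6, of 1] c[unfolded sum_6, of 2] c[unfolded sum_6, of 3]
            c[unfolded sum_6, of 4] c[unfolded sum_6, of 5] c[unfolded sum_6, of 6]
  show "Re mu < 0"
  proof (cases "v$1 \<noteq> 0 \<or> v$2 \<noteq> 0 \<or> v$3 \<noteq> 0")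
    case True
    show ?thesis by (rule PA[OF _ _ _ True]) (use c6(1,2,3) z in \<open>simp_all add: algebra_simps\<close>)
  next
    case False
    have "v$4 \<noteq> 0 \<or> v$5 \<noteq> 0 \<or> v$6 \<noteq> 0"
    proof (rule ccontr)
      assume "\<not> ?thesis"
      with False have "v$i = 0" for i using exhaust_6[of i] by auto
      hence "v = 0" unfolding vec_eq_iff by simp
      with nz show False by simp
    qed
    then show ?thesis by (rule PB[rotated 3]) (use c6(4,5,6) False in \<open>simp_all add: algebra_simps\<close>)
  qed
qed

lemma Ibar_props:
  assumes "b0 > 0" "tauI > 0" "tauR > 0" "k > 0" "b0 * tauI > 1"
  shows "Ibar b0 tauI tauR k > 0 \<and>
         exp (k * Ibar b0 tauI tauR k) = b0 * tauI - b0 * (tauI + tauR) * Ibar b0 tauI tauR k"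
proof -
  define g where "g I = exp (k * I) - b0 * tauI + b0 * (tauI + tauR) * I" for I
  have mono: "g x < g y" if "x < y" for x y
  proof -
    have "exp (k*x) < exp (k*y)" using that assms by simp
    moreover have "b0 * (tauI + tauR) * x < b0 * (tauI + tauR) * y"
    proof (rule mult_strict_left_mono)
      show "0 < b0 * (tauI + tauR)" using assms by simp
    qed (rule that)
    ultimately show ?thesis unfolding g_def by linarith
  qed
  have "g 0 \<le> 0" using assms unfolding g_def by simp
  moreover have "0 \<le> g 1"
  proof -
    have "g 1 = exp k + b0 * tauR" unfolding g_def by (simp add: algebra_simps)
    moreover have "b0 * tauR > 0" using assms by simp
    ultimately show ?thesis by (smt (verit) exp_gt_zero)
  qed
  moreover have "continuous_on {0..1} g" unfolding g_def by (intro continuous_intros)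
  ultimately obtain x where x: "0 \<le> x" "x \<le> 1" "g x = 0"
    using IVT'[of g 0 0 1] by auto
  have "x \<noteq> 0" using x assms unfolding g_def by auto
  with x have xp: "x > 0" by simp
  have P: "x > 0 \<and> exp (k * x) = b0 * tauI - b0 * (tauI + tauR) * x"
    using xp x unfolding g_def by simp
  have "Ibar b0 tauI tauR k = x"
    unfolding Ibar_def
  proof (rule the_equality)
    show "x > 0 \<and> exp (k * x) = b0 * tauI - b0 * (tauI + tauR) * x" by (rule P)
  next
    fix y assume y: "y > 0 \<and> exp (k * y) = b0 * tauI - b0 * (tauI + tauR) * y"
    hence "g y = 0" unfolding g_def by simp
    show "y = x"
    proof (rule ccontr)
      assume "y \<noteq> x"
      hence "y < x \<or> x < y" by linarith
      thus False
      proof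
        assume "y < x" from mono[OF this] show False using \<open>g y = 0\<close> x(3) by simp
      next
        assume "x < y" from mono[OF this] show False using \<open>g y = 0\<close> x(3) by simp
      qed
    qed
  qed
  thus ?thesis using P by simp
qed


lemma jac_eq:
  assumes "tauI \<noteq> 0" "tauR \<noteq> 0" "tauP \<noteq> 0"
  shows "jacobian (reduced_field b0A b0B tauI tauR tauP k s) (at x) = Jm b0A b0B tauI tauR tauP k s x"
  unfolding jacobian_def using frechet_derivative_at[OF F_deriv[OF assms]]
  by (metis matrix_of_matrix_vector_mul)

lemma stable_EB:
  assumes pos: "b0A > 0" "b0B > 0" "tauI > 0" "tauR > 0" "tauP > 0" "k > 0"
    and RA: "b0A * tauI > 1"
    and RB: "b0B * (1 - s * (1 - exp (- k * Ibar b0A tauI tauR k))) < 1 / tauI"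
  shows "loc_asym_stable (reduced_field b0A b0B tauI tauR tauP k s) (B_free_eq b0A tauI tauR k)"
proof -
  define I where "I = Ibar b0A tauI tauR k"
  have Ip: "I > 0" and Ie: "exp (k * I) = b0A * tauI - b0A * (tauI + tauR) * I"
    using Ibar_props[OF pos(1,3,4,6) RA] unfolding I_def by auto
  define S where "S = 1 - I - tauR / tauI * I"
  have S1: "b0A * tauI * S = exp (k * I)" unfolding Ie S_def using pos by (simp add: field_simps)
  have bS: "b0A * exp (- (k * I)) * S = 1 / tauI"
  proof -
    have "b0A * exp (- (k * I)) * S * tauI = exp (- (k * I)) * (b0A * tauI * S)" by (simp add: algebra_simps)
    also have "\<dots> = 1" unfolding S1 by (simp add: exp_minus)
    finally show ?thesis using pos by (simp add: field_simps)
  qed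
  have bS': "b0A * exp (- (k * I)) * S * I = I / tauI" using bS by (metis times_divide_eq_left mult_1)
  have bS3: "I * (S * (b0A * (k * exp (- (I * k))))) = I * k / tauI"
  proof -
    have "I * (S * (b0A * (k * exp (- (I * k))))) = (I*k) * (b0A * exp (- (k * I)) * S)"
      by (simp add: algebra_simps)
    also have "\<dots> = I * k / tauI" using bS by simp
    finally show ?thesis .
  qed
  have EB: "B_free_eq b0A tauI tauR k = vector [S, I, I, 1, 0, 0]"
    by (simp add: B_free_eq_def I_def S_def Let_def)
  define J where "J = Jm b0A b0B tauI tauR tauP k s (vector [S, I, I, 1, 0, 0])"
  have jac: "jacobian (reduced_field b0A b0B tauI tauR tauP k s) (at (B_free_eq b0A tauI tauR k)) = J"
    unfolding EB J_def by (rule jac_eq) (use pos in auto)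
  show ?thesis
    unfolding loc_asym_stable_def jac
  proof (rule block_upper)
    show "J$4$1=0" "J$4$2=0" "J$4$3=0" "J$5$1=0" "J$5$2=0" "J$5$3=0" "J$6$1=0" "J$6$2=0" "J$6$3=0"
      by (simp_all add: J_def Jm_def Let_def)
  next
    fix mu v4 v5 v6 :: complex
    assume e: "of_real (J$4$4) * v4 + of_real (J$4$5) * v5 + of_real (J$4$6) * v6 = mu * v4"
      "of_real (J$5$4) * v4 + of_real (J$5$5) * v5 + of_real (J$5$6) * v6 = mu * v5"
      "of_real (J$6$4) * v4 + of_real (J$6$5) * v5 + of_real (J$6$6) * v6 = mu * v6"
      and nz: "v4 \<noteq> 0 \<or> v5 \<noteq> 0 \<or> v6 \<noteq> 0"
    show "Re mu < 0"
      by (rule tri3[where r="1/tauR" and d="b0B * (1 - s * (1 - exp (- k * I))) - 1/tauI" and p="1/tauP",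
                    OF _ _ _ _ _ _ _ _ _ _ e nz])
         (use pos RB in \<open>simp_all add: J_def Jm_def Let_def beta_eff_def I_def\<close>)
  next
    fix mu v1 v2 v3 :: complex
    assume e: "of_real (J$1$1) * v1 + of_real (J$1$2) * v2 + of_real (J$1$3) * v3 = mu * v1"
      "of_real (J$2$1) * v1 + of_real (J$2$2) * v2 + of_real (J$2$3) * v3 = mu * v2"
      "of_real (J$3$1) * v1 + of_real (J$3$2) * v2 + of_real (J$3$3) * v3 = mu * v3"
      and nz: "v1 \<noteq> 0 \<or> v2 \<noteq> 0 \<or> v3 \<noteq> 0"
    show "Re mu < 0"
      by (rule cub3[where a="b0A * exp (- (k * I)) * I" and r="1/tauR" and i="1/tauI" and p="1/tauP"
                     and c="k * I / tauI", OF _ _ _ _ _ _ _ _ _ _ _ _ _ _ e nz])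
         (use pos Ip bS bS' bS3 in \<open>simp_all add: J_def Jm_def Let_def beta_eff_def algebra_simps\<close>)
  qed
qed
lemma stable_EA:
  assumes pos: "b0A > 0" "b0B > 0" "tauI > 0" "tauR > 0" "tauP > 0" "k > 0"
    and RA: "b0B * tauI > 1"
    and RB: "b0A * (1 - s * (1 - exp (- k * Ibar b0B tauI tauR k))) < 1 / tauI"
  shows "loc_asym_stable (reduced_field b0A b0B tauI tauR tauP k s) (A_free_eq b0B tauI tauR k)"
proof -
  define I where "I = Ibar b0B tauI tauR k"
  have Ip: "I > 0" and Ie: "exp (k * I) = b0B * tauI - b0B * (tauI + tauR) * I"
    using Ibar_props[OF pos(2,3,4,6) RA] unfolding I_def by auto
  define S where "S = 1 - I - tauR / tauI * I"
  have S1: "b0B * tauI * S = exp (k * I)" unfolding Ie S_def using pos by (simp add: field_simps)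
  have bS: "b0B * exp (- (k * I)) * S = 1 / tauI"
  proof -
    have "b0B * exp (- (k * I)) * S * tauI = exp (- (k * I)) * (b0B * tauI * S)" by (simp add: algebra_simps)
    also have "\<dots> = 1" unfolding S1 by (simp add: exp_minus)
    finally show ?thesis using pos by (simp add: field_simps)
  qed
  have bS': "b0B * exp (- (k * I)) * S * I = I / tauI" using bS by (metis times_divide_eq_left mult_1)
  have bS3: "I * (S * (b0B * (k * exp (- (I * k))))) = I * k / tauI"
  proof -
    have "I * (S * (b0B * (k * exp (- (I * k))))) = (I*k) * (b0B * exp (- (k * I)) * S)"
      by (simp add: algebra_simps)
    also have "\<dots> = I * k / tauI" using bS by simp
    finally show ?thesis .
  qed
  have EA: "A_free_eq b0B tauI tauR k = vector [1, 0, 0, S, I, I]"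
    by (simp add: A_free_eq_def I_def S_def Let_def)
  define J where "J = Jm b0A b0B tauI tauR tauP k s (vector [1, 0, 0, S, I, I])"
  have jac: "jacobian (reduced_field b0A b0B tauI tauR tauP k s) (at (A_free_eq b0B tauI tauR k)) = J"
    unfolding EA J_def by (rule jac_eq) (use pos in auto)
  show ?thesis
    unfolding loc_asym_stable_def jac
  proof (rule block_lower)
    show "J$1$4=0" "J$1$5=0" "J$1$6=0" "J$2$4=0" "J$2$5=0" "J$2$6=0" "J$3$4=0" "J$3$5=0" "J$3$6=0"
      by (simp_all add: J_def Jm_def Let_def)
  next
    fix mu v4 v5 v6 :: complex
    assume e: "of_real (J$4$4) * v4 + of_real (J$4$5) * v5 + of_real (J$4$6) * v6 = mu * v4"
      "of_real (J$5$4) * v4 + of_real (J$5$5) * v5 + of_real (J$5$6) * v6 = mu * v5"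
      "of_real (J$6$4) * v4 + of_real (J$6$5) * v5 + of_real (J$6$6) * v6 = mu * v6"
      and nz: "v4 \<noteq> 0 \<or> v5 \<noteq> 0 \<or> v6 \<noteq> 0"
    show "Re mu < 0"
      by (rule cub3[where a="b0B * exp (- (k * I)) * I" and r="1/tauR" and i="1/tauI" and p="1/tauP"
                     and c="k * I / tauI", OF _ _ _ _ _ _ _ _ _ _ _ _ _ _ e nz])
         (use pos Ip bS bS' bS3 in \<open>simp_all add: J_def Jm_def Let_def beta_eff_def algebra_simps\<close>)
  next
    fix mu v1 v2 v3 :: complex
    assume e: "of_real (J$1$1) * v1 + of_real (J$1$2) * v2 + of_real (J$1$3) * v3 = mu * v1"
      "of_real (J$2$1) * v1 + of_real (J$2$2) * v2 + of_real (J$2$3) * v3 = mu * v2"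
      "of_real (J$3$1) * v1 + of_real (J$3$2) * v2 + of_real (J$3$3) * v3 = mu * v3"
      and nz: "v1 \<noteq> 0 \<or> v2 \<noteq> 0 \<or> v3 \<noteq> 0"
    show "Re mu < 0"
      by (rule tri3[where r="1/tauR" and d="b0A * (1 - s * (1 - exp (- k * I))) - 1/tauI" and p="1/tauP",
                    OF _ _ _ _ _ _ _ _ _ _ e nz])
         (use pos RB in \<open>simp_all add: J_def Jm_def Let_def beta_eff_def I_def\<close>)
  qed
qed

lemma EB_gen:
  assumes pos: "b0A > 0" "b0B > 0" "tauI > 0" "tauR > 0" "tauP > 0" "k > 0"
    and s: "0 \<le> s" "s \<le> 1"
    and RA: "b0A * tauI > 1"
    and RB: "b0B * tauI < exp (k * Ibar b0A tauI tauR k) /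
               (exp (k * Ibar b0A tauI tauR k) - s * (exp (k * Ibar b0A tauI tauR k) - 1))"
  shows "loc_asym_stable (reduced_field b0A b0B tauI tauR tauP k s) (B_free_eq b0A tauI tauR k)
         \<and> b0A * tauI > b0B * tauI"
proof -
  define I where "I = Ibar b0A tauI tauR k"
  have Ip: "I > 0" and Ie: "exp (k * I) = b0A * tauI - b0A * (tauI + tauR) * I"
    using Ibar_props[OF pos(1,3,4,6) RA] unfolding I_def by auto
  define E where "E = exp (k * I)"
  have E1: "E > 1" unfolding E_def using Ip pos by simp
  define D where "D = E - s * (E - 1)"
  have D1: "D \<ge> 1"
  proof -
    have "D = 1 + (1 - s) * (E - 1)" unfolding D_def by (simp add: algebra_simps)
    moreover have "(1 - s) * (E - 1) \<ge> 0" using s E1 by simp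
    ultimately show ?thesis by simp
  qed
  have RB': "b0B * tauI < E / D" using RB unfolding E_def D_def I_def .
  hence "b0B * tauI * D < E" using D1 by (simp add: field_simps)
  hence "b0B * D / E < 1 / tauI" using E1 pos by (simp add: field_simps)
  moreover have "1 - s * (1 - exp (- k * I)) = D / E"
    unfolding D_def E_def using E1 by (simp add: field_simps exp_minus)
  ultimately have RB2: "b0B * (1 - s * (1 - exp (- k * Ibar b0A tauI tauR k))) < 1 / tauI"
    unfolding I_def by simp
  have "E / D \<le> E" using D1 E1 by (simp add: field_simps)
  moreover have "E < b0A * tauI"
  proof -
    have "b0A * (tauI + tauR) * I > 0" using pos Ip by simp
    thus ?thesis unfolding E_def Ie by simp
  qed
  ultimately have "b0A * tauI > b0B * tauI" using RB' by linarith
  thus ?thesis using stable_EB[OF pos RA RB2] by simp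
qed

lemma EA_gen:
  assumes pos: "b0A > 0" "b0B > 0" "tauI > 0" "tauR > 0" "tauP > 0" "k > 0"
    and s: "0 \<le> s" "s \<le> 1"
    and RA: "b0B * tauI > 1"
    and RB: "b0A * tauI < exp (k * Ibar b0B tauI tauR k) /
               (exp (k * Ibar b0B tauI tauR k) - s * (exp (k * Ibar b0B tauI tauR k) - 1))"
  shows "loc_asym_stable (reduced_field b0A b0B tauI tauR tauP k s) (A_free_eq b0B tauI tauR k)
         \<and> b0B * tauI > b0A * tauI"
proof -
  define I where "I = Ibar b0B tauI tauR k"
  have Ip: "I > 0" and Ie: "exp (k * I) = b0B * tauI - b0B * (tauI + tauR) * I"
    using Ibar_props[OF pos(2,3,4,6) RA] unfolding I_def by auto
  define E where "E = exp (k * I)"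
  have E1: "E > 1" unfolding E_def using Ip pos by simp
  define D where "D = E - s * (E - 1)"
  have D1: "D \<ge> 1"
  proof -
    have "D = 1 + (1 - s) * (E - 1)" unfolding D_def by (simp add: algebra_simps)
    moreover have "(1 - s) * (E - 1) \<ge> 0" using s E1 by simp
    ultimately show ?thesis by simp
  qed
  have RB': "b0A * tauI < E / D" using RB unfolding E_def D_def I_def .
  hence "b0A * tauI * D < E" using D1 by (simp add: field_simps)
  hence "b0A * D / E < 1 / tauI" using E1 pos by (simp add: field_simps)
  moreover have "1 - s * (1 - exp (- k * I)) = D / E"
    unfolding D_def E_def using E1 by (simp add: field_simps exp_minus)
  ultimately have RB2: "b0A * (1 - s * (1 - exp (- k * Ibar b0B tauI tauR k))) < 1 / tauI"
    unfolding I_def by simp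
  have "E / D \<le> E" using D1 E1 by (simp add: field_simps)
  moreover have "E < b0B * tauI"
  proof -
    have "b0B * (tauI + tauR) * I > 0" using pos Ip by simp
    thus ?thesis unfolding E_def Ie by simp
  qed
  ultimately have "b0B * tauI > b0A * tauI" using RB' by linarith
  thus ?thesis using stable_EA[OF pos RA RB2] by simp
qed

theorem theorem4:
  fixes b0A b0B tauI tauR tauP k s :: real
  assumes pos: "b0A > 0" "b0B > 0" "tauI > 0" "tauR > 0" "tauP > 0" "k > 0"
    and s_range: "0 \<le> s" "s \<le> 1"
  defines "F \<equiv> reduced_field b0A b0B tauI tauR tauP k s"
    and "R0A \<equiv> b0A * tauI" and "R0B \<equiv> b0B * tauI"
    and "IA \<equiv> Ibar b0A tauI tauR k" and "IB \<equiv> Ibar b0B tauI tauR k"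
    and "EB \<equiv> B_free_eq b0A tauI tauR k" and "EA \<equiv> A_free_eq b0B tauI tauR k"
  shows
    "(s = 0 \<and> R0A > 1 \<and> R0B < 1 \<longrightarrow> loc_asym_stable F EB) \<and>
     (s = 0 \<and> R0B > 1 \<and> R0A < 1 \<longrightarrow> loc_asym_stable F EA) \<and>
     (s = 1 \<and> R0A > 1 \<and> R0B < exp (k * IA) \<longrightarrow> loc_asym_stable F EB \<and> R0A > R0B) \<and>
     (s = 1 \<and> R0B > 1 \<and> R0A < exp (k * IB) \<longrightarrow> loc_asym_stable F EA \<and> R0B > R0A) \<and>
     (0 < s \<and> s < 1 \<and> R0A > 1 \<and>
        R0B < exp (k * IA) / (exp (k * IA) - s * (exp (k * IA) - 1))
        \<longrightarrow> loc_asym_stable F EB \<and> R0A > R0B) \<and>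
     (0 < s \<and> s < 1 \<and> R0B > 1 \<and>
        R0A < exp (k * IB) / (exp (k * IB) - s * (exp (k * IB) - 1))
        \<longrightarrow> loc_asym_stable F EA \<and> R0B > R0A)"
proof -
  have e0: "x / (x - 0 * (x - 1)) = 1" if "x > 0" for x :: real using that by simp
  have e1: "x / (x - 1 * (x - 1)) = x" for x :: real by simp
  note B = EB_gen[OF pos s_range] and A = EA_gen[OF pos s_range]
  show ?thesis
    unfolding F_def R0A_def R0B_def IA_def IB_def EB_def EA_def
  proof (intro conjI impI; elim conjE)
    assume "s = 0" "1 < b0A * tauI" "b0B * tauI < 1"
    thus "loc_asym_stable (reduced_field b0A b0B tauI tauR tauP k s) (B_free_eq b0A tauI tauR k)"
      using B e0[of "exp (k * Ibar b0A tauI tauR k)"] by simp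
  next
    assume "s = 0" "1 < b0B * tauI" "b0A * tauI < 1"
    thus "loc_asym_stable (reduced_field b0A b0B tauI tauR tauP k s) (A_free_eq b0B tauI tauR k)"
      using A e0[of "exp (k * Ibar b0B tauI tauR k)"] by simp
  next
    assume "s = 1" "1 < b0A * tauI" "b0B * tauI < exp (k * Ibar b0A tauI tauR k)"
    thus "loc_asym_stable (reduced_field b0A b0B tauI tauR tauP k s) (B_free_eq b0A tauI tauR k)"
         "b0B * tauI < b0A * tauI"
      using B e1[of "exp (k * Ibar b0A tauI tauR k)"] by simp_all
  next
    assume "s = 1" "1 < b0B * tauI" "b0A * tauI < exp (k * Ibar b0B tauI tauR k)"
    thus "loc_asym_stable (reduced_field b0A b0B tauI tauR tauP k s) (A_free_eq b0B tauI tauR k)"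
         "b0A * tauI < b0B * tauI"
      using A e1[of "exp (k * Ibar b0B tauI tauR k)"] by simp_all
  next
    assume "1 < b0A * tauI" "b0B * tauI < exp (k * Ibar b0A tauI tauR k) /
      (exp (k * Ibar b0A tauI tauR k) - s * (exp (k * Ibar b0A tauI tauR k) - 1))"
    thus "loc_asym_stable (reduced_field b0A b0B tauI tauR tauP k s) (B_free_eq b0A tauI tauR k)"
         "b0B * tauI < b0A * tauI"
      using B by simp_all
  next
    assume "1 < b0B * tauI" "b0A * tauI < exp (k * Ibar b0B tauI tauR k) /
      (exp (k * Ibar b0B tauI tauR k) - s * (exp (k * Ibar b0B tauI tauR k) - 1))"
    thus "loc_asym_stable (reduced_field b0A b0B tauI tauR tauP k s) (A_free_eq b0B tauI tauR k)"
         "b0A * tauI < b0B * tauI"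
      using A by simp_all
  qed
qed
end
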